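(* Let $n\ge 2$, $\rho>0$, $\varepsilon\in[0,1]$, and let $F_1,\dots,F_n$ be continuous distributions on $\mathbb{R}$, each with a monotone density. For any joint distribution of channel gains $(|h_1|^2,\dots,|h_n|^2)$ with $|h_i|^2\sim F_i$ for each $i$, the $\varepsilon$-outage capacity $R^{\varepsilon}$ satisfies $$\log_2\bigl(1-\rho\,\Phi_{-}(1-\varepsilon)\bigr)\le R^{\varepsilon}\le\log_2\bigl(1+\rho\,\Phi(\varepsilon)\bigr).$$
   Context: $R^{\varepsilon}=\sup\{R\ge0:\Pr(\sum_{i=1}^n|h_i|^2<(2^R-1)/\rho)<\varepsilon\}$. With $G_i=F_i^{-1}$ and $X_i\sim F_i$, define $\Phi(a)=\sum_{i=1}^n\mathbb{E}[X_i\mid X_i\ge G_i(a)]$. The function $\Phi_{-}$ is $\Phi$ computed for the random variables $-X_i$, i.e. $\Phi_{-}(a)=\sum_{i=1}^n\mathbb{E}[-X_i\mid -X_i\ge G_{i,-}(a)]$ where $G_{i,-}(x)=-G_i(1-x)$ is the quantile function of $-X_i$. *)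

theory Defs
  imports "HOL-Probability.Probability"
begin

text \<open>A continuous distribution on the reals: a probability measure on the Borel sets
  without atoms (equivalently, with a continuous cdf).\<close>
definition continuous_distribution :: "real measure \<Rightarrow> bool" where
  "continuous_distribution \<mu> \<longleftrightarrow>
     prob_space \<mu> \<and> sets \<mu> = sets borel \<and> (\<forall>x. measure \<mu> {x} = 0)"

definition has_monotone_density :: "real measure \<Rightarrow> bool" where
  "has_monotone_density \<mu> \<longleftrightarrow>
     (\<exists>f I. f \<in> borel_measurable borel \<and> (\<forall>x. 0 \<le> f x) \<and>
            \<mu> = density lborel (\<lambda>x. ennreal (f x)) \<and>
            is_interval I \<and> (\<forall>x. x \<notin> I \<longrightarrow> f x = 0) \<and>
            (mono_on I f \<or> antimono_on I f))"

definition quantile :: "real measure \<Rightarrow> real \<Rightarrow> real" where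
  "quantile \<mu> a = Inf {x. a \<le> cdf \<mu> x}"

text \<open>E[X | X \<ge> g] for X distributed according to \<mu>, as the elementary conditional
  expectation E[X 1{X \<ge> g}] / P(X \<ge> g), with the expectation taken in the extended reals
  (so that it may be +\<infinity>).\<close>
definition cond_exp_ge :: "real measure \<Rightarrow> real \<Rightarrow> ereal" where
  "cond_exp_ge \<mu> g =
     (enn2ereal (\<integral>\<^sup>+x. ennreal x * indicator {g..} x \<partial>\<mu>)
      - enn2ereal (\<integral>\<^sup>+x. ennreal (- x) * indicator {g..} x \<partial>\<mu>))
     / ereal (measure \<mu> {g..})"

definition Phi :: "nat \<Rightarrow> (nat \<Rightarrow> real measure) \<Rightarrow> (nat \<Rightarrow> real \<Rightarrow> real) \<Rightarrow> real \<Rightarrow> ereal" where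
  "Phi n F G a = (\<Sum>i<n. cond_exp_ge (F i) (G i a))"

text \<open>\<Phi>_-(a) = \<Sum>_i E[-X_i | -X_i \<ge> G_{i,-}(a)] with G_{i,-}(x) = - G_i(1 - x);
  -X_i has distribution distr F_i borel uminus.\<close>
definition Phi_minus :: "nat \<Rightarrow> (nat \<Rightarrow> real measure) \<Rightarrow> real \<Rightarrow> ereal" where
  "Phi_minus n F a =
     Phi n (\<lambda>i. distr (F i) borel uminus) (\<lambda>i x. - quantile (F i) (1 - x)) a"

definition outage_capacity ::
  "'a measure \<Rightarrow> (nat \<Rightarrow> 'a \<Rightarrow> complex) \<Rightarrow> nat \<Rightarrow> real \<Rightarrow> real \<Rightarrow> real" where
  "outage_capacity M h n \<rho> \<epsilon> =
     Sup {R. 0 \<le> R \<and>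
        measure M {\<omega> \<in> space M. (\<Sum>i<n. (cmod (h i \<omega>))\<^sup>2) < (2 powr R - 1) / \<rho>} < \<epsilon>}"

fun elog2 :: "ereal \<Rightarrow> ereal" where
  "elog2 (ereal x) = ereal (log 2 x)"
| "elog2 PInfty = PInfty"
| "elog2 MInfty = MInfty"

end

theory Submission
  imports Defs
begin


lemma (in prob_space) upper_one:
  fixes X :: "'a \<Rightarrow> real"
  assumes Xm: "X \<in> borel_measurable M" and Xp: "\<forall>\<omega>\<in>space M. 0 \<le> X \<omega>"
   and int: "integrable M (\<lambda>\<omega>. X \<omega> * indicator {g..} (X \<omega>))"
   and B: "B \<in> events"
   and p: "0 < prob {\<omega>\<in>space M. g \<le> X \<omega>}" "prob {\<omega>\<in>space M. g \<le> X \<omega>} \<le> prob B"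
  shows "integrable M (\<lambda>\<omega>. X \<omega> * indicator B \<omega>)"
    "(\<integral>\<omega>. X \<omega> * indicator B \<omega> \<partial>M) \<le> prob B * ((\<integral>\<omega>. X \<omega> * indicator {g..} (X \<omega>) \<partial>M) / prob {\<omega>\<in>space M. g \<le> X \<omega>})"
proof -
  define P where "P = {\<omega>\<in>space M. g \<le> X \<omega>}"
  define I where "I = (\<integral>\<omega>. X \<omega> * indicator {g..} (X \<omega>) \<partial>M)"
  have Pe: "P \<in> events" unfolding P_def using Xm by measurable
  have iP: "integrable M (\<lambda>\<omega>. c * indicator P \<omega>)" for c :: real
    using Pe by (intro integrable_mult_right integrable_real_indicator) (auto simp: emeasure_eq_measure)
  have iB: "integrable M (\<lambda>\<omega>. c * indicator B \<omega>)" for c :: real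
    using B by (intro integrable_mult_right integrable_real_indicator) (auto simp: emeasure_eq_measure)
  have ind: "indicator {g..} (X \<omega>) = (indicator P \<omega> :: real)" if "\<omega> \<in> space M" for \<omega>
    using that by (auto simp: P_def indicator_def)
  show i1: "integrable M (\<lambda>\<omega>. X \<omega> * indicator B \<omega>)"
  proof (rule Bochner_Integration.integrable_bound[OF Bochner_Integration.integrable_add[OF int integrable_const[of "\<bar>g\<bar>"]]])
    show "(\<lambda>\<omega>. X \<omega> * indicator B \<omega>) \<in> borel_measurable M" using Xm B by measurable
    show "AE x in M. norm (X x * indicator B x) \<le> norm (X x * indicator {g..} (X x) + \<bar>g\<bar>)"
      using Xp by (auto simp: indicator_def)
  qed
  have "(\<integral>\<omega>. X \<omega> * indicator B \<omega> \<partial>M) \<le> (\<integral>\<omega>. X \<omega> * indicator {g..} (X \<omega>) + g * indicator B \<omega> - g * indicator P \<omega> \<partial>M)"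
    by (rule integral_mono[OF i1]) (use int iB iP ind in \<open>auto simp: indicator_def P_def\<close>)
  also have "\<dots> = I + g * prob B - g * prob P"
    using int iB iP B Pe by (simp add: I_def)
  finally have a: "(\<integral>\<omega>. X \<omega> * indicator B \<omega> \<partial>M) \<le> I + g * prob B - g * prob P" .
  have "g * prob P = (\<integral>\<omega>. g * indicator P \<omega> \<partial>M)" using Pe by simp
  also have "\<dots> \<le> I" unfolding I_def
    by (rule integral_mono[OF iP int]) (use ind in \<open>auto simp: indicator_def P_def\<close>)
  finally have b: "g * prob P \<le> I" .
  have pP: "0 < prob P" "prob P \<le> prob B" using p by (auto simp: P_def)
  have gI: "g \<le> I / prob P" using b pP by (simp add: field_simps)
  have "g * (prob B - prob P) \<le> (I / prob P) * (prob B - prob P)"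
    using gI pP by (intro mult_right_mono) auto
  then have "I + g * prob B - g * prob P \<le> prob B * (I / prob P)"
    using pP by (simp add: field_simps)
  with a show "(\<integral>\<omega>. X \<omega> * indicator B \<omega> \<partial>M) \<le> prob B * ((\<integral>\<omega>. X \<omega> * indicator {g..} (X \<omega>) \<partial>M) / prob {\<omega>\<in>space M. g \<le> X \<omega>})"
    by (simp add: I_def P_def)
qed

lemma (in prob_space) lower_one:
  fixes X :: "'a \<Rightarrow> real"
  assumes Xm: "X \<in> borel_measurable M" and Xp: "\<forall>\<omega>\<in>space M. 0 \<le> X \<omega>"
   and i1: "integrable M (\<lambda>\<omega>. X \<omega> * indicator B \<omega>)"
   and B: "B \<in> events"
   and p: "0 < prob {\<omega>\<in>space M. X \<omega> \<le> g}" "prob {\<omega>\<in>space M. X \<omega> \<le> g} \<le> prob B"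
  shows "integrable M (\<lambda>\<omega>. X \<omega> * indicator {..g} (X \<omega>))"
    "prob B * ((\<integral>\<omega>. X \<omega> * indicator {..g} (X \<omega>) \<partial>M) / prob {\<omega>\<in>space M. X \<omega> \<le> g}) \<le> (\<integral>\<omega>. X \<omega> * indicator B \<omega> \<partial>M)"
proof -
  define P where "P = {\<omega>\<in>space M. X \<omega> \<le> g}"
  define I where "I = (\<integral>\<omega>. X \<omega> * indicator {..g} (X \<omega>) \<partial>M)"
  have Pe: "P \<in> events" unfolding P_def using Xm by measurable
  have iP: "integrable M (\<lambda>\<omega>. c * indicator P \<omega>)" for c :: real
    using Pe by (intro integrable_mult_right integrable_real_indicator) (auto simp: emeasure_eq_measure)
  have iB: "integrable M (\<lambda>\<omega>. c * indicator B \<omega>)" for c :: real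
    using B by (intro integrable_mult_right integrable_real_indicator) (auto simp: emeasure_eq_measure)
  have ind: "indicator {..g} (X \<omega>) = (indicator P \<omega> :: real)" if "\<omega> \<in> space M" for \<omega>
    using that by (auto simp: P_def indicator_def)
  show int: "integrable M (\<lambda>\<omega>. X \<omega> * indicator {..g} (X \<omega>))"
  proof (rule Bochner_Integration.integrable_bound[OF integrable_const[of "\<bar>g\<bar>"]])
    show "(\<lambda>\<omega>. X \<omega> * indicator {..g} (X \<omega>)) \<in> borel_measurable M" using Xm by measurable
    show "AE x in M. norm (X x * indicator {..g} (X x)) \<le> norm \<bar>g\<bar>"
      using Xp by (auto simp: indicator_def)
  qed
  have "(\<integral>\<omega>. X \<omega> * indicator {..g} (X \<omega>) + g * indicator B \<omega> - g * indicator P \<omega> \<partial>M) \<le> (\<integral>\<omega>. X \<omega> * indicator B \<omega> \<partial>M)"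
    by (rule integral_mono[OF _ i1]) (use int iB iP ind in \<open>auto simp: indicator_def P_def\<close>)
  moreover have "(\<integral>\<omega>. X \<omega> * indicator {..g} (X \<omega>) + g * indicator B \<omega> - g * indicator P \<omega> \<partial>M) = I + g * prob B - g * prob P"
    using int iB iP B Pe by (simp add: I_def)
  ultimately have a: "I + g * prob B - g * prob P \<le> (\<integral>\<omega>. X \<omega> * indicator B \<omega> \<partial>M)" by simp
  have "I \<le> (\<integral>\<omega>. g * indicator P \<omega> \<partial>M)" unfolding I_def
    by (rule integral_mono[OF int iP]) (use ind in \<open>auto simp: indicator_def P_def\<close>)
  also have "\<dots> = g * prob P" using Pe by simp
  finally have b: "I \<le> g * prob P" .
  have pP: "0 < prob P" "prob P \<le> prob B" using p by (auto simp: P_def)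
  have gI: "I / prob P \<le> g" using b pP by (simp add: field_simps)
  have "(I / prob P) * (prob B - prob P) \<le> g * (prob B - prob P)"
    using gI pP by (intro mult_right_mono) auto
  then have "prob B * (I / prob P) \<le> I + g * prob B - g * prob P"
    using pP by (simp add: field_simps)
  with a show "prob B * ((\<integral>\<omega>. X \<omega> * indicator {..g} (X \<omega>) \<partial>M) / prob {\<omega>\<in>space M. X \<omega> \<le> g}) \<le> (\<integral>\<omega>. X \<omega> * indicator B \<omega> \<partial>M)"
    by (simp add: I_def P_def)
qed



lemma quantile_props:
  assumes F: "real_distribution F" and at: "\<forall>x. measure F {x} = 0"
    and e: "0 < e" "e < 1" and neg: "\<forall>x<0. cdf F x = 0"
  shows "0 \<le> quantile F e \<and> cdf F (quantile F e) = e \<and> measure F {..<quantile F e} = e"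
proof -
  interpret real_distribution F by fact
  define S where "S = {x. e \<le> cdf F x}"
  have g: "quantile F e = Inf S" by (simp add: quantile_def S_def)
  have "\<forall>\<^sub>F x in at_top. e < cdf F x"
    using cdf_lim_at_top_prob e(2) by (rule order_tendstoD)
  then obtain x0 where "e < cdf F x0" by (metis eventually_happens trivial_limit_at_top_linorder)
  then have ne: "S \<noteq> {}" by (auto simp: S_def intro!: exI[of _ x0])
  have lb: "0 \<le> x" if "x \<in> S" for x
    using that neg e unfolding S_def by (metis linorder_not_le mem_Collect_eq)
  then have bdd: "bdd_below S" by (auto simp: bdd_below_def)
  have g0: "0 \<le> Inf S" using ne lb by (intro cInf_greatest) auto
  have ge: "e \<le> cdf F (Inf S)"
  proof (rule tendsto_lowerbound[OF _ _ trivial_limit_at_right_real])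
    show "(cdf F \<longlongrightarrow> cdf F (Inf S)) (at_right (Inf S))"
      using cdf_is_right_cont by (simp add: continuous_within)
    have "\<forall>y. Inf S < y \<longrightarrow> e \<le> cdf F y"
    proof (intro allI impI)
      fix y assume "Inf S < y"
      then obtain s where "s \<in> S" "s < y" using cInf_lessD[OF ne] by blast
      then show "e \<le> cdf F y" using cdf_nondecreasing[of s y] by (auto simp: S_def)
    qed
    then show "\<forall>\<^sub>F x in at_right (Inf S). e \<le> cdf F x"
      by (auto simp: eventually_at_right_field intro!: exI[of _ "Inf S + 1"])
  qed
  have le: "measure F {..<Inf S} \<le> e"
  proof (rule tendsto_upperbound[OF cdf_at_left _ trivial_limit_at_left_real])
    have "\<forall>y. y < Inf S \<longrightarrow> cdf F y \<le> e"
    proof (intro allI impI)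
      fix y assume "y < Inf S"
      then have "y \<notin> S" using cInf_lower[OF _ bdd, of y] by force
      then show "cdf F y \<le> e" by (auto simp: S_def)
    qed
    then show "\<forall>\<^sub>F x in at_left (Inf S). cdf F x \<le> e"
      by (auto simp: eventually_at_left_field intro!: exI[of _ "Inf S - 1"])
  qed
  have "cdf F (Inf S) = measure F ({..<Inf S} \<union> {Inf S})"
    by (simp add: cdf_def) (metis Un_insert_right atMost_iff insert_absorb lessThan_iff less_le atMost_def lessThan_def sup_bot.right_neutral ivl_disj_un(2))
  also have "\<dots> = measure F {..<Inf S} + measure F {Inf S}"
    by (rule finite_measure_Union) auto
  finally have "cdf F (Inf S) = measure F {..<Inf S}" using at by simp
  then show ?thesis using g g0 ge le by simp
qed



lemma (in prob_space) exists_level: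
  fixes S :: "'a \<Rightarrow> real"
  assumes Sm: "S \<in> borel_measurable M" and e: "e < 1"
  shows "\<exists>k::nat. e \<le> prob {\<omega>\<in>space M. S \<omega> < real k}"
proof -
  define A where "A k = {\<omega>\<in>space M. S \<omega> < real k}" for k :: nat
  have "(\<lambda>k. prob (A k)) \<longlonglongrightarrow> prob (\<Union>k. A k)"
  proof (rule finite_Lim_measure_incseq)
    show "range A \<subseteq> events" unfolding A_def using Sm by auto
    show "incseq A" unfolding A_def incseq_def
      by (auto elim: less_le_trans)
  qed
  moreover have "(\<Union>k. A k) = space M"
    by (auto simp: A_def intro: reals_Archimedean2)
  ultimately have "(\<lambda>k. prob (A k)) \<longlonglongrightarrow> 1" by (simp add: prob_space)
  then have "\<forall>\<^sub>F k in sequentially. e < prob (A k)" using e by (rule order_tendstoD)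
  then obtain k where "e < prob (A k)" by (metis eventually_sequentially order_refl)
  then show ?thesis unfolding A_def by (auto intro!: exI[of _ k])
qed

lemma cond_exp_distr:
  fixes Y :: "'a \<Rightarrow> real"
  assumes Ym: "Y \<in> borel_measurable M"
  shows "cond_exp_ge (distr M borel Y) c =
    (enn2ereal (\<integral>\<^sup>+\<omega>. ennreal (Y \<omega>) * indicator {c..} (Y \<omega>) \<partial>M)
     - enn2ereal (\<integral>\<^sup>+\<omega>. ennreal (- Y \<omega>) * indicator {c..} (Y \<omega>) \<partial>M))
    / ereal (measure M {\<omega>\<in>space M. c \<le> Y \<omega>})"
proof -
  have "measure (distr M borel Y) {c..} = measure M (Y -` {c..} \<inter> space M)"
    using Ym by (intro measure_distr) auto
  also have "Y -` {c..} \<inter> space M = {\<omega>\<in>space M. c \<le> Y \<omega>}" by auto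
  finally show ?thesis unfolding cond_exp_ge_def using Ym
    by (subst (1 2) nn_integral_distr) auto
qed



theorem theorem3:
  fixes n :: nat and \<rho> \<epsilon> :: real
    and F :: "nat \<Rightarrow> real measure"
    and M :: "'a measure" and h :: "nat \<Rightarrow> 'a \<Rightarrow> complex"
  assumes "n \<ge> 2" and "\<rho> > 0" and "0 < \<epsilon>" and "\<epsilon> < 1"
    and "\<forall>i<n. continuous_distribution (F i)"
    and "\<forall>i<n. has_monotone_density (F i)"
    and "prob_space M"
    and "\<forall>i<n. h i \<in> borel_measurable M"
    and "\<forall>i<n. distr M borel (\<lambda>\<omega>. (cmod (h i \<omega>))\<^sup>2) = F i"
  shows "elog2 (1 - ereal \<rho> * Phi_minus n F (1 - \<epsilon>)) \<le> ereal (outage_capacity M h n \<rho> \<epsilon>)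
       \<and> ereal (outage_capacity M h n \<rho> \<epsilon>) \<le> elog2 (1 + ereal \<rho> * Phi n F (\<lambda>i. quantile (F i)) \<epsilon>)"
proof -
  note rho = \<open>\<rho> > 0\<close> and e = \<open>0 < \<epsilon>\<close> \<open>\<epsilon> < 1\<close>
  interpret prob_space M by fact
  define X where "X i \<omega> = (cmod (h i \<omega>))\<^sup>2" for i \<omega>
  define S where "S \<omega> = (\<Sum>i<n. X i \<omega>)" for \<omega>
  define g where "g i = quantile (F i) \<epsilon>" for i
  have Xm: "X i \<in> borel_measurable M" if "i < n" for i
  proof -
    have "h i \<in> borel_measurable M" using assms(8) that by auto
    then show ?thesis unfolding X_def by measurable
  qed
  have Xp: "0 \<le> X i \<omega>" for i \<omega> by (simp add: X_def)
  have Sm: "S \<in> borel_measurable M" unfolding S_def using Xm by auto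
  have Sp: "0 \<le> S \<omega>" for \<omega> unfolding S_def by (simp add: Xp sum_nonneg)
  have Fd: "F i = distr M borel (X i)" if "i < n" for i
  proof -
    have "X i = (\<lambda>\<omega>. (cmod (h i \<omega>))\<^sup>2)" by (simp add: fun_eq_iff X_def)
    then show ?thesis using assms(9) that by simp
  qed
  have qf: "0 \<le> g i \<and> prob {\<omega>\<in>space M. X i \<omega> \<le> g i} = \<epsilon> \<and> prob {\<omega>\<in>space M. g i \<le> X i \<omega>} = 1 - \<epsilon>"
    if i: "i < n" for i
  proof -
    have cd: "continuous_distribution (F i)" using assms(5) i by auto
    have rd: "real_distribution (F i)" using cd
      unfolding continuous_distribution_def real_distribution_def real_distribution_axioms_def by auto
    have cdfX: "cdf (F i) x = prob {\<omega>\<in>space M. X i \<omega> \<le> x}" for x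
    proof -
      have "cdf (F i) x = measure (distr M borel (X i)) {..x}" by (simp add: cdf_def Fd[OF i])
      also have "\<dots> = prob (X i -` {..x} \<inter> space M)" using Xm[OF i] by (intro measure_distr) auto
      finally show ?thesis by (simp add: vimage_def Int_def conj_commute)
    qed
    have ltX: "measure (F i) {..<x} = prob {\<omega>\<in>space M. X i \<omega> < x}" for x
    proof -
      have "measure (F i) {..<x} = measure (distr M borel (X i)) {..<x}" by (simp add: Fd[OF i])
      also have "\<dots> = prob (X i -` {..<x} \<inter> space M)" using Xm[OF i] by (intro measure_distr) auto
      finally show ?thesis by (simp add: vimage_def Int_def conj_commute)
    qed
    have neg: "\<forall>x<0. cdf (F i) x = 0"
    proof (intro allI impI)
      fix x :: real assume "x < 0"
      then have "{\<omega>\<in>space M. X i \<omega> \<le> x} = {}" using Xp[of i] by (auto simp: not_le intro: less_le_trans)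
      then show "cdf (F i) x = 0" by (simp only: cdfX) simp
    qed
    have q: "0 \<le> g i \<and> cdf (F i) (g i) = \<epsilon> \<and> measure (F i) {..<g i} = \<epsilon>"
      unfolding g_def using quantile_props[OF rd _ e neg] cd by (auto simp: continuous_distribution_def)
    have "prob {\<omega>\<in>space M. g i \<le> X i \<omega>} = prob (space M - {\<omega>\<in>space M. X i \<omega> < g i})"
      by (rule arg_cong[where f=prob]) auto
    also have "\<dots> = 1 - prob {\<omega>\<in>space M. X i \<omega> < g i}"
      using Xm[OF i] by (intro prob_compl) measurable
    finally show ?thesis using q by (simp add: cdfX ltX)
  qed
  define A where "A = {R. 0 \<le> R \<and> measure M {\<omega> \<in> space M. (\<Sum>i<n. (cmod (h i \<omega>))\<^sup>2) < (2 powr R - 1) / \<rho>} < \<epsilon>}"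
  have A_eq: "A = {R. 0 \<le> R \<and> prob {\<omega> \<in> space M. S \<omega> < (2 powr R - 1) / \<rho>} < \<epsilon>}"
    by (simp add: A_def S_def X_def)
  have oc: "outage_capacity M h n \<rho> \<epsilon> = Sup A" by (simp add: outage_capacity_def A_def)
  have A0: "0 \<in> A"
  proof -
    have "{\<omega> \<in> space M. S \<omega> < 0} = {}" using Sp by (auto simp: not_less)
    then have "prob {\<omega> \<in> space M. S \<omega> < 0} = 0" by (metis measure_empty)
    then show ?thesis using e by (simp add: A_eq)
  qed
  obtain k :: nat where k: "\<epsilon> \<le> prob {\<omega>\<in>space M. S \<omega> < real k}"
    using exists_level[OF Sm e(2)] by blast
  have Abdd: "bdd_above A"
  proof (rule bdd_aboveI)
    fix R assume R: "R \<in> A"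
    have "(2 powr R - 1) / \<rho> < real k"
    proof (rule ccontr)
      assume "\<not> ?thesis"
      then have "prob {\<omega>\<in>space M. S \<omega> < real k} \<le> prob {\<omega> \<in> space M. S \<omega> < (2 powr R - 1) / \<rho>}"
        using Sm by (intro finite_measure_mono) auto
      then show False using R k by (simp add: A_eq)
    qed
    then have "2 powr R < 1 + \<rho> * real k" using rho by (simp add: field_simps)
    then have "log 2 (2 powr R) < log 2 (1 + \<rho> * real k)"
      using rho by (subst log_less_cancel_iff) (auto intro: add_pos_nonneg)
    then show "R \<le> log 2 (1 + \<rho> * real k)" by simp
  qed
  have zX: "(\<integral>\<^sup>+\<omega>. ennreal (- X i \<omega>) * indicator C (Y \<omega>) \<partial>M) = 0" for i C and Y :: "'a \<Rightarrow> real"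
  proof -
    have "ennreal (- X i \<omega>) = 0" for \<omega> using Xp[of i \<omega>] by (intro ennreal_neg) simp
    then show ?thesis by simp
  qed
  have upper: "ereal (Sup A) \<le> elog2 (1 + ereal \<rho> * Phi n F (\<lambda>i. quantile (F i)) \<epsilon>)"
  proof (cases "\<forall>i<n. integrable M (\<lambda>\<omega>. X i \<omega> * indicator {g i..} (X i \<omega>))")
    case True
    define T where "T i = (\<integral>\<omega>. X i \<omega> * indicator {g i..} (X i \<omega>) \<partial>M) / (1 - \<epsilon>)" for i
    have T0: "0 \<le> T i" for i unfolding T_def using e
      by (intro divide_nonneg_pos integral_nonneg_AE) (auto simp: Xp)
    have ce: "cond_exp_ge (F i) (g i) = ereal (T i)" if i: "i<n" for i
    proof -
      have "(\<integral>\<^sup>+\<omega>. ennreal (X i \<omega>) * indicator {g i..} (X i \<omega>) \<partial>M) = (\<integral>\<^sup>+\<omega>. ennreal (X i \<omega> * indicator {g i..} (X i \<omega>)) \<partial>M)"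
        by (intro nn_integral_cong) (simp add: indicator_def)
      also have "\<dots> = ennreal (\<integral>\<omega>. X i \<omega> * indicator {g i..} (X i \<omega>) \<partial>M)"
        using True i by (intro nn_integral_eq_integral) (auto simp: Xp)
      finally have p: "(\<integral>\<^sup>+\<omega>. ennreal (X i \<omega>) * indicator {g i..} (X i \<omega>) \<partial>M) = ennreal (\<integral>\<omega>. X i \<omega> * indicator {g i..} (X i \<omega>) \<partial>M)" .
      have I0: "0 \<le> (\<integral>\<omega>. X i \<omega> * indicator {g i..} (X i \<omega>) \<partial>M)"
        by (intro integral_nonneg_AE) (auto simp: Xp)
      show ?thesis using cond_exp_distr[OF Xm[OF i], of "g i"] Fd[OF i] zX[of i] p I0 qf[OF i] e
        by (simp add: T_def zero_ennreal.rep_eq)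
    qed
    have Phi_eq: "Phi n F (\<lambda>i. quantile (F i)) \<epsilon> = ereal (\<Sum>i<n. T i)"
    proof -
      have "Phi n F (\<lambda>i. quantile (F i)) \<epsilon> = (\<Sum>i<n. ereal (T i))"
        unfolding Phi_def by (rule sum.cong) (auto simp: ce[unfolded g_def])
      then show ?thesis by simp
    qed
    have bound: "Sup A \<le> log 2 (1 + \<rho> * (\<Sum>i<n. T i))"
    proof (rule cSup_least)
      show "A \<noteq> {}" using A0 by auto
      fix R assume R: "R \<in> A"
      define t where "t = (2 powr R - 1) / \<rho>"
      define B where "B = {\<omega>\<in>space M. t \<le> S \<omega>}"
      have Be: "B \<in> events" unfolding B_def using Sm by measurable
      have "prob B = prob (space M - {\<omega>\<in>space M. S \<omega> < t})"
        by (rule arg_cong[where f=prob]) (auto simp: B_def)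
      also have "\<dots> = 1 - prob {\<omega>\<in>space M. S \<omega> < t}"
        using Sm by (intro prob_compl) measurable
      finally have PB: "1 - \<epsilon> < prob B" using R by (simp add: A_eq t_def)
      have ub: "integrable M (\<lambda>\<omega>. X i \<omega> * indicator B \<omega>) \<and> (\<integral>\<omega>. X i \<omega> * indicator B \<omega> \<partial>M) \<le> prob B * T i"
        if i: "i<n" for i
        using upper_one[OF Xm[OF i] _ True[rule_format, OF i] Be] qf[OF i] e PB by (auto simp: T_def Xp)
      have SB: "(\<lambda>\<omega>. S \<omega> * indicator B \<omega>) = (\<lambda>\<omega>. \<Sum>i<n. X i \<omega> * indicator B \<omega>)"
        by (simp add: S_def sum_distrib_right fun_eq_iff)
      have iSB: "integrable M (\<lambda>\<omega>. S \<omega> * indicator B \<omega>)" unfolding SB using ub by (intro Bochner_Integration.integrable_sum) auto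
      have "t * prob B = (\<integral>\<omega>. t * indicator B \<omega> \<partial>M)" using Be by simp
      also have "\<dots> \<le> (\<integral>\<omega>. S \<omega> * indicator B \<omega> \<partial>M)"
      proof (rule integral_mono[OF _ iSB])
        show "integrable M (\<lambda>\<omega>. t * indicator B \<omega>)" using Be
          by (intro integrable_mult_right integrable_real_indicator) (auto simp: emeasure_eq_measure)
      qed (auto simp: B_def indicator_def)
      also have "\<dots> = (\<Sum>i<n. \<integral>\<omega>. X i \<omega> * indicator B \<omega> \<partial>M)" unfolding SB
        using ub by (intro Bochner_Integration.integral_sum) auto
      also have "\<dots> \<le> (\<Sum>i<n. prob B * T i)" using ub by (intro sum_mono) auto
      also have "\<dots> = prob B * (\<Sum>i<n. T i)" by (simp add: sum_distrib_left)
      finally have "t * prob B \<le> (\<Sum>i<n. T i) * prob B" by (simp add: mult.commute)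
      moreover have "0 < prob B" using PB e by linarith
      ultimately have "t \<le> (\<Sum>i<n. T i)" by simp
      then have "2 powr R \<le> 1 + \<rho> * (\<Sum>i<n. T i)" using rho by (simp add: t_def field_simps)
      then have "log 2 (2 powr R) \<le> log 2 (1 + \<rho> * (\<Sum>i<n. T i))"
        by (intro log_mono) auto
      then show "R \<le> log 2 (1 + \<rho> * (\<Sum>i<n. T i))" by simp
    qed
    have "1 + ereal \<rho> * Phi n F (\<lambda>i. quantile (F i)) \<epsilon> = ereal (1 + \<rho> * (\<Sum>i<n. T i))"
      by (simp add: Phi_eq one_ereal_def)
    then show ?thesis using bound by simp
  next
    case False
    then obtain j where j: "j<n" "\<not> integrable M (\<lambda>\<omega>. X j \<omega> * indicator {g j..} (X j \<omega>))" by auto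
    have inf: "(\<integral>\<^sup>+\<omega>. ennreal (X j \<omega>) * indicator {g j..} (X j \<omega>) \<partial>M) = \<infinity>"
    proof (rule ccontr)
      assume a: "\<not> ?thesis"
      have "(\<integral>\<^sup>+\<omega>. ennreal (norm (X j \<omega> * indicator {g j..} (X j \<omega>))) \<partial>M) = (\<integral>\<^sup>+\<omega>. ennreal (X j \<omega>) * indicator {g j..} (X j \<omega>) \<partial>M)"
        by (intro nn_integral_cong) (simp add: indicator_def Xp)
      then have "(\<integral>\<^sup>+\<omega>. ennreal (norm (X j \<omega> * indicator {g j..} (X j \<omega>))) \<partial>M) < \<infinity>"
        using a by (simp add: top.not_eq_extremum)
      then have "integrable M (\<lambda>\<omega>. X j \<omega> * indicator {g j..} (X j \<omega>))"
        using Xm[OF j(1)] by (intro integrableI_bounded) auto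
      then show False using j by simp
    qed
    have "cond_exp_ge (F j) (g j) = \<infinity>"
      using cond_exp_distr[OF Xm[OF j(1)], of "g j"] Fd[OF j(1)] zX[of j] inf qf[OF j(1)] e by (simp add: zero_ennreal.rep_eq)
    then have "Phi n F (\<lambda>i. quantile (F i)) \<epsilon> = \<infinity>"
      unfolding Phi_def using j by (auto simp: sum_Pinfty g_def)
    then have "1 + ereal \<rho> * Phi n F (\<lambda>i. quantile (F i)) \<epsilon> = \<infinity>" using rho by simp
    moreover have "elog2 \<infinity> = \<infinity>" unfolding infinity_ereal_def by (rule elog2.simps(2))
    ultimately show ?thesis by (metis ereal_less_eq(1))
  qed
  have lower: "elog2 (1 - ereal \<rho> * Phi_minus n F (1 - \<epsilon>)) \<le> ereal (Sup A)"
  proof -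
    define J where "J i = (\<integral>\<omega>. X i \<omega> * indicator {..g i} (X i \<omega>) \<partial>M) / \<epsilon>" for i
    have intJ: "integrable M (\<lambda>\<omega>. X i \<omega> * indicator {..g i} (X i \<omega>))" if i: "i<n" for i
    proof (rule Bochner_Integration.integrable_bound[OF integrable_const[of "\<bar>g i\<bar>"]])
      show "(\<lambda>\<omega>. X i \<omega> * indicator {..g i} (X i \<omega>)) \<in> borel_measurable M" using Xm[OF i] by measurable
      show "AE x in M. norm (X i x * indicator {..g i} (X i x)) \<le> norm \<bar>g i\<bar>"
        using Xp[of i] by (auto simp: indicator_def)
    qed
    have J0: "0 \<le> J i" for i unfolding J_def using e
      by (intro divide_nonneg_pos integral_nonneg_AE) (auto simp: Xp)
    have ce: "cond_exp_ge (distr (F i) borel uminus) (- quantile (F i) \<epsilon>) = ereal (- J i)"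
      if i: "i<n" for i
    proof -
      have mX: "(\<lambda>\<omega>. - X i \<omega>) \<in> borel_measurable M" using Xm[OF i] by measurable
      have d: "distr (F i) borel uminus = distr M borel (\<lambda>\<omega>. - X i \<omega>)"
        unfolding Fd[OF i] using Xm[OF i] by (subst distr_distr) (auto simp: comp_def)
      have q: "- quantile (F i) \<epsilon> = - g i" by (simp add: g_def)
      have "(\<integral>\<^sup>+\<omega>. ennreal (- (- X i \<omega>)) * indicator {- g i..} (- X i \<omega>) \<partial>M) = (\<integral>\<^sup>+\<omega>. ennreal (X i \<omega> * indicator {..g i} (X i \<omega>)) \<partial>M)"
        by (intro nn_integral_cong) (simp add: indicator_def)
      also have "\<dots> = ennreal (\<integral>\<omega>. X i \<omega> * indicator {..g i} (X i \<omega>) \<partial>M)"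
        using intJ[OF i] by (intro nn_integral_eq_integral) (auto simp: Xp)
      finally have p: "(\<integral>\<^sup>+\<omega>. ennreal (- (- X i \<omega>)) * indicator {- g i..} (- X i \<omega>) \<partial>M) = ennreal (\<integral>\<omega>. X i \<omega> * indicator {..g i} (X i \<omega>) \<partial>M)" .
      have I0: "0 \<le> (\<integral>\<omega>. X i \<omega> * indicator {..g i} (X i \<omega>) \<partial>M)"
        by (intro integral_nonneg_AE) (auto simp: Xp)
      have st: "{\<omega>\<in>space M. - g i \<le> - X i \<omega>} = {\<omega>\<in>space M. X i \<omega> \<le> g i}" by auto
      show ?thesis unfolding d q cond_exp_distr[OF mX] zX p st using I0 qf[OF i] e
        by (simp add: J_def zero_ennreal.rep_eq)
    qed
    have Phi_eq: "Phi_minus n F (1 - \<epsilon>) = ereal (- (\<Sum>i<n. J i))"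
    proof -
      have "Phi_minus n F (1 - \<epsilon>) = (\<Sum>i<n. ereal (- J i))"
        unfolding Phi_minus_def Phi_def by (rule sum.cong) (auto simp: ce)
      then show ?thesis by (simp add: sum_negf)
    qed
    have L: "1 - ereal \<rho> * Phi_minus n F (1 - \<epsilon>) = ereal (1 + \<rho> * (\<Sum>i<n. J i))"
      by (simp add: Phi_eq one_ereal_def)
    define c where "c = log 2 (1 + \<rho> * (\<Sum>i<n. J i))"
    have pos: "0 < 1 + \<rho> * (\<Sum>i<n. J i)" using rho J0 by (simp add: add_pos_nonneg sum_nonneg)
    have inA: "R \<in> A" if R: "0 \<le> R" "R < c" for R
    proof -
      define t where "t = (2 powr R - 1) / \<rho>"
      have "2 powr R < 2 powr c" using R by simp
      also have "2 powr c = 1 + \<rho> * (\<Sum>i<n. J i)" unfolding c_def using pos by simp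
      finally have tJ: "t < (\<Sum>i<n. J i)" using rho by (simp add: t_def field_simps)
      have "prob {\<omega>\<in>space M. S \<omega> < t} < \<epsilon>"
      proof (rule ccontr)
        assume "\<not> ?thesis"
        then have PB: "\<epsilon> \<le> prob {\<omega>\<in>space M. S \<omega> < t}" by simp
        define B where "B = {\<omega>\<in>space M. S \<omega> < t}"
        have Be: "B \<in> events" unfolding B_def using Sm by measurable
        have XS: "X i \<omega> \<le> S \<omega>" if "i<n" for i \<omega>
          unfolding S_def using that by (intro member_le_sum) (auto simp: Xp)
        have iB: "integrable M (\<lambda>\<omega>. X i \<omega> * indicator B \<omega>)" if i: "i<n" for i
        proof (rule Bochner_Integration.integrable_bound[OF integrable_const[of "\<bar>t\<bar>"]])
          show "(\<lambda>\<omega>. X i \<omega> * indicator B \<omega>) \<in> borel_measurable M" using Xm[OF i] Be by measurable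
          show "AE x in M. norm (X i x * indicator B x) \<le> norm \<bar>t\<bar>"
          proof (intro AE_I2)
            fix x
            have "X i x \<le> \<bar>t\<bar>" if "S x < t" using XS[OF i, of x] that by linarith
            then show "norm (X i x * indicator B x) \<le> norm \<bar>t\<bar>"
              using Xp[of i x] by (auto simp: indicator_def B_def)
          qed
        qed
        have lb: "prob B * J i \<le> (\<integral>\<omega>. X i \<omega> * indicator B \<omega> \<partial>M)" if i: "i<n" for i
          using lower_one(2)[OF Xm[OF i] _ iB[OF i] Be, of "g i"] qf[OF i] e PB by (auto simp: J_def Xp B_def)
        have SB: "(\<lambda>\<omega>. S \<omega> * indicator B \<omega>) = (\<lambda>\<omega>. \<Sum>i<n. X i \<omega> * indicator B \<omega>)"
          by (simp add: S_def sum_distrib_right fun_eq_iff)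
        have iSB: "integrable M (\<lambda>\<omega>. S \<omega> * indicator B \<omega>)" unfolding SB using iB
          by (intro Bochner_Integration.integrable_sum) auto
        have "prob B * (\<Sum>i<n. J i) = (\<Sum>i<n. prob B * J i)" by (simp add: sum_distrib_left)
        also have "\<dots> \<le> (\<Sum>i<n. \<integral>\<omega>. X i \<omega> * indicator B \<omega> \<partial>M)" using lb by (intro sum_mono) auto
        also have "\<dots> = (\<integral>\<omega>. S \<omega> * indicator B \<omega> \<partial>M)" unfolding SB
          using iB by (intro Bochner_Integration.integral_sum[symmetric]) auto
        also have "\<dots> \<le> (\<integral>\<omega>. t * indicator B \<omega> \<partial>M)"
        proof (rule integral_mono[OF iSB])
          show "integrable M (\<lambda>\<omega>. t * indicator B \<omega>)" using Be
            by (intro integrable_mult_right integrable_real_indicator) (auto simp: emeasure_eq_measure)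
        qed (auto simp: B_def indicator_def)
        also have "\<dots> = t * prob B" using Be by simp
        finally have "(\<Sum>i<n. J i) * prob B \<le> t * prob B" by (simp add: mult.commute)
        moreover have "0 < prob B" using PB e unfolding B_def by linarith
        ultimately have "(\<Sum>i<n. J i) \<le> t" by simp
        then show False using tJ by simp
      qed
      then show ?thesis using R by (simp add: A_eq t_def)
    qed
    have "c \<le> Sup A"
    proof (cases "c \<le> 0")
      case True
      then show ?thesis using cSup_upper[OF A0 Abdd] by simp
    next
      case False
      show ?thesis
      proof (rule dense_le_bounded[of 0])
        show "0 < c" using False by simp
        fix w assume "0 < w" "w < c"
        then show "w \<le> Sup A" using inA[of w] by (intro cSup_upper Abdd) auto
      qed
    qed
    then show ?thesis unfolding L by (simp add: c_def)
  qed
  show ?thesis using lower upper oc by simp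
qed

end
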